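(* Let $\boldsymbol{\mathcal{D}} = \begin{pmatrix}\boldsymbol{W}_p\\ \boldsymbol{U}_f \\ \boldsymbol{Y}_f\end{pmatrix}$ be a data matrix with full row rank and LQ decomposition as described in the context, let $\boldsymbol{Z}:=\begin{pmatrix}\boldsymbol{W}_p\\ \boldsymbol{U}_f\end{pmatrix}$, $\boldsymbol{\Pi}:=\boldsymbol{Z}^+\boldsymbol{Z}$, $\boldsymbol{\Pi}_\perp:=\boldsymbol{I}-\boldsymbol{\Pi}$, and let $\lambda_2,\lambda_3$ be real weights. Then $\boldsymbol{\gamma}$-DDPC with regularization $\tilde h(\boldsymbol{\gamma}) = \lambda_2 \|\boldsymbol{\gamma}_2\|_2^2 + \lambda_3 \|\boldsymbol{\gamma}_3\|_2^2$ is equivalent to DeePC with regularization $h(\boldsymbol{a}) = \lambda_2 \|\boldsymbol{a}\|_2^2 + (\lambda_3-\lambda_2) \|\boldsymbol{\Pi}_\perp\boldsymbol{a}\|_2^2$.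
   Context: $\boldsymbol{Z}^+$ denotes the Moore–Penrose pseudoinverse. Data: $m$ inputs, $p$ outputs, past horizon $N_p$, future horizon $N_f$, $L=N_p+N_f$, and $\ell$ data trajectories. The data matrix $\boldsymbol{\mathcal{D}}\in\mathbb{R}^{L(m+p)\times\ell}$ has blocks $\boldsymbol{W}_p\in\mathbb{R}^{N_p(m+p)\times\ell}$ (past inputs and outputs), $\boldsymbol{U}_f\in\mathbb{R}^{mN_f\times \ell}$, $\boldsymbol{Y}_f\in\mathbb{R}^{pN_f\times\ell}$ and is assumed to have full row rank. Its LQ decomposition is $\boldsymbol{\mathcal{D}} = \begin{pmatrix} \boldsymbol{L}_{11} & \boldsymbol{0} & \boldsymbol{0} & \boldsymbol{0} \\ \boldsymbol{L}_{21} & \boldsymbol{L}_{22} & \boldsymbol{0} & \boldsymbol{0} \\ \boldsymbol{L}_{31} & \boldsymbol{L}_{32} & \boldsymbol{L}_{33} & \boldsymbol{0} \end{pmatrix}\begin{pmatrix}\boldsymbol{Q}_1\\ \boldsymbol{Q}_2\\ \boldsymbol{Q}_3\\ \boldsymbol{Q}_4\end{pmatrix}$, with non-singular square diagonal blocks $\boldsymbol{L}_{11},\boldsymbol{L}_{22},\boldsymbol{L}_{33}$ (of sizes matching $\boldsymbol{W}_p,\boldsymbol{U}_f,\boldsymbol{Y}_f$) and $\boldsymbol{Q}=\begin{pmatrix}\boldsymbol{Q}_1^\top & \boldsymbol{Q}_2^\top&\boldsymbol{Q}_3^\top&\boldsymbol{Q}_4^\top\end{pmatrix}^\top\in\mathbb{R}^{\ell\times\ell}$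 orthogonal; $\boldsymbol{\gamma}_i := \boldsymbol{Q}_i\boldsymbol{a}$. Given current past I/O data $\boldsymbol{\xi}\in\mathbb{R}^{N_p(m+p)}$, a cost $J(\boldsymbol{\xi},\mathbf{u}_f,\mathbf{y}_f)$ and constraint sets $\mathcal{U}$, $\mathcal{Y}$: DeePC with regularization $h$ is the problem $\min_{\mathbf{u}_f,\mathbf{y}_f,\boldsymbol{a}} J(\boldsymbol{\xi},\mathbf{u}_f,\mathbf{y}_f)+h(\boldsymbol{a})$ s.t. $(\boldsymbol{\xi};\mathbf{u}_f;\mathbf{y}_f)=\boldsymbol{\mathcal{D}}\boldsymbol{a}$, $(\mathbf{u}_f,\mathbf{y}_f)\in\mathcal{U}\times\mathcal{Y}$. $\boldsymbol{\gamma}$-DDPC with regularization $\tilde h$ is the problem $\min_{\mathbf{u}_f,\mathbf{y}_f,\boldsymbol{\gamma}_2,\boldsymbol{\gamma}_3} J(\boldsymbol{\xi},\mathbf{u}_f,\mathbf{y}_f)+\tilde h(\boldsymbol{\gamma})$ s.t. $\boldsymbol{\gamma}_1=\boldsymbol{L}_{11}^{-1}\boldsymbol{\xi}$, $\mathbf{u}_f = \boldsymbol{L}_{21}\boldsymbol{\gamma}_1+\boldsymbol{L}_{22}\boldsymbol{\gamma}_2$, $\mathbf{y}_f=\boldsymbol{L}_{31}\boldsymbol{\gamma}_1+\boldsymbol{L}_{32}\boldsymbol{\gamma}_2+\boldsymbol{L}_{33}\boldsymbol{\gamma}_3$, $(\mathbf{u}_f,\mathbf{y}_f)\in\mathcal{U}\times\mathcal{Y}$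 (i.e., $\boldsymbol{\gamma}_4=\boldsymbol{0}$ is fixed). Two such optimal control problems are called equivalent if, for every $\boldsymbol{\xi}$, they yield the same optimal predicted input/output trajectories $(\mathbf{u}_f^\ast,\mathbf{y}_f^\ast)$ (not necessarily the same optimal cost). *)

theory Defs
  imports "Jordan_Normal_Form.Matrix"
begin

definition vstack :: "'a::zero mat \<Rightarrow> 'a mat \<Rightarrow> 'a mat" where
  "vstack A B = mat (dim_row A + dim_row B) (dim_col A)
     (\<lambda>(i,j). if i < dim_row A then A $$ (i,j) else B $$ (i - dim_row A, j))"

definition full_row_rank :: "real mat \<Rightarrow> bool" where
  "full_row_rank A \<longleftrightarrow> (\<forall>v \<in> carrier_vec (dim_row A).
       transpose_mat A *\<^sub>v v = 0\<^sub>v (dim_col A) \<longrightarrow> v = 0\<^sub>v (dim_row A))"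

definition mat_inv :: "real mat \<Rightarrow> real mat" where
  "mat_inv A = (THE B. B \<in> carrier_mat (dim_col A) (dim_row A) \<and>
                       A * B = 1\<^sub>m (dim_row A) \<and> B * A = 1\<^sub>m (dim_col A))"

definition pinv :: "real mat \<Rightarrow> real mat" where
  "pinv A = (THE X. X \<in> carrier_mat (dim_col A) (dim_row A) \<and>
                    A * X * A = A \<and> X * A * X = X \<and>
                    transpose_mat (A * X) = A * X \<and> transpose_mat (X * A) = X * A)"

definition sqnorm :: "real vec \<Rightarrow> real" where
  "sqnorm v = v \<bullet> v"

text \<open>Set of optimal predicted input/output trajectories of DeePC with regularization h,
  for data matrix D, past data xi, cost J and constraint sets U, Y.
  nu, ny: lengths of u_f and y_f; l: number of data columns.\<close>
definition deepc_opt ::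
  "real mat \<Rightarrow> nat \<Rightarrow> nat \<Rightarrow> (real vec \<Rightarrow> real vec \<Rightarrow> real vec \<Rightarrow> real) \<Rightarrow>
   (real vec \<Rightarrow> real) \<Rightarrow> real vec set \<Rightarrow> real vec set \<Rightarrow> real vec \<Rightarrow> (real vec \<times> real vec) set" where
  "deepc_opt D nu ny J h U Y xi =
    (let feas = (\<lambda>u y a. u \<in> carrier_vec nu \<and> y \<in> carrier_vec ny \<and> a \<in> carrier_vec (dim_col D) \<and>
                          xi @\<^sub>v u @\<^sub>v y = D *\<^sub>v a \<and> u \<in> U \<and> y \<in> Y);
         cost = (\<lambda>u y a. J xi u y + h a)
     in {(u, y). \<exists>a. feas u y a \<and>
           (\<forall>u' y' a'. feas u' y' a' \<longrightarrow> cost u y a \<le> cost u' y' a')})"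

text \<open>Set of optimal predicted input/output trajectories of gamma-DDPC with regularization
  ht (a function of gamma_2 and gamma_3; gamma_1 is fixed by xi and gamma_4 = 0).\<close>
definition gddpc_opt ::
  "real mat \<Rightarrow> real mat \<Rightarrow> real mat \<Rightarrow> real mat \<Rightarrow> real mat \<Rightarrow> real mat \<Rightarrow>
   (real vec \<Rightarrow> real vec \<Rightarrow> real vec \<Rightarrow> real) \<Rightarrow>
   (real vec \<Rightarrow> real vec \<Rightarrow> real vec \<Rightarrow> real) \<Rightarrow> real vec set \<Rightarrow> real vec set \<Rightarrow> real vec \<Rightarrow>
   (real vec \<times> real vec) set" where
  "gddpc_opt L11 L21 L22 L31 L32 L33 J ht U Y xi =
    (let g1 = mat_inv L11 *\<^sub>v xi;
         feas = (\<lambda>u y g2 g3. g2 \<in> carrier_vec (dim_col L22) \<and> g3 \<in> carrier_vec (dim_col L33) \<and>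
                    u = L21 *\<^sub>v g1 + L22 *\<^sub>v g2 \<and>
                    y = L31 *\<^sub>v g1 + L32 *\<^sub>v g2 + L33 *\<^sub>v g3 \<and> u \<in> U \<and> y \<in> Y);
         cost = (\<lambda>u y g2 g3. J xi u y + ht g1 g2 g3)
     in {(u, y). \<exists>g2 g3. feas u y g2 g3 \<and>
           (\<forall>u' y' g2' g3'. feas u' y' g2' g3' \<longrightarrow> cost u y g2 g3 \<le> cost u' y' g2' g3')})"

end

theory Submission
  imports Defs "Jordan_Normal_Form.Determinant"
begin

lemma vstack_carrier[simp]: "A \<in> carrier_mat n1 c \<Longrightarrow> B \<in> carrier_mat n2 c \<Longrightarrow> vstack A B \<in> carrier_mat (n1+n2) c"
  unfolding vstack_def by auto

lemma vstack_row: assumes "A \<in> carrier_mat n1 c" "B \<in> carrier_mat n2 c" "i < n1 + n2"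
  shows "row (vstack A B) i = (if i < n1 then row A i else row B (i - n1))"
  using assms unfolding vstack_def by (intro eq_vecI) auto

lemma vstack_mult_vec: assumes "A \<in> carrier_mat n1 c" "B \<in> carrier_mat n2 c"
  shows "vstack A B *\<^sub>v a = (A *\<^sub>v a) @\<^sub>v (B *\<^sub>v a)"
proof (rule eq_vecI)
  fix i assume "i < dim_vec ((A *\<^sub>v a) @\<^sub>v (B *\<^sub>v a))"
  then have "i < n1 + n2" using assms by auto
  then show "(vstack A B *\<^sub>v a) $ i = ((A *\<^sub>v a) @\<^sub>v (B *\<^sub>v a)) $ i"
    using assms vstack_row[OF assms] unfolding mult_mat_vec_def by (auto simp: vstack_def)
qed (use assms in \<open>auto simp: vstack_def\<close>)

lemma vstack_transpose_mult_vec: assumes A: "A \<in> carrier_mat n1 c" and B: "B \<in> carrier_mat n2 c"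
  and x: "x \<in> carrier_vec n1" and y: "y \<in> carrier_vec n2"
  shows "transpose_mat (vstack A B) *\<^sub>v (x @\<^sub>v y) = transpose_mat A *\<^sub>v x + transpose_mat B *\<^sub>v y"
proof (rule eq_vecI)
  fix j assume j: "j < dim_vec (transpose_mat A *\<^sub>v x + transpose_mat B *\<^sub>v y)"
  hence jc: "j < c" using A B by auto
  have "col (vstack A B) j = col A j @\<^sub>v col B j"
    using A B jc unfolding vstack_def by (intro eq_vecI) auto
  moreover have "col A j \<in> carrier_vec n1" "col B j \<in> carrier_vec n2" using A B by auto
  moreover have "(transpose_mat (vstack A B) *\<^sub>v (x @\<^sub>v y)) $ j = col (vstack A B) j \<bullet> (x @\<^sub>v y)"
    using vstack_carrier[OF A B] jc by simp
  ultimately show "(transpose_mat (vstack A B) *\<^sub>v (x @\<^sub>v y)) $ j = (transpose_mat A *\<^sub>v x + transpose_mat B *\<^sub>v y) $ j"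
    using A B jc x y scalar_prod_append[of "col A j" n1 "col B j" n2 x y] by simp
qed (use A B in \<open>auto simp: vstack_def\<close>)

lemma mat_inv_props: assumes A: "A \<in> carrier_mat n n" and inv: "invertible_mat A"
  shows "mat_inv A \<in> carrier_mat n n \<and> A * mat_inv A = 1\<^sub>m n \<and> mat_inv A * A = 1\<^sub>m n"
proof -
  obtain B where AB: "A * B = 1\<^sub>m n" and BA: "B * A = 1\<^sub>m (dim_row B)"
    using inv A unfolding invertible_mat_def inverts_mat_def by auto
  have "dim_col B = n" using arg_cong[OF AB, of dim_col] by simp
  moreover have "dim_row B = n" using arg_cong[OF BA, of dim_col] A by simp
  ultimately have B: "B \<in> carrier_mat n n" by auto
  with BA have BA: "B * A = 1\<^sub>m n" by simp
  have P: "B \<in> carrier_mat (dim_col A) (dim_row A) \<and> A * B = 1\<^sub>m (dim_row A) \<and> B * A = 1\<^sub>m (dim_col A)"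
    using A B AB BA by auto
  have U: "B' = B" if "B' \<in> carrier_mat (dim_col A) (dim_row A) \<and> A * B' = 1\<^sub>m (dim_row A) \<and> B' * A = 1\<^sub>m (dim_col A)" for B'
  proof -
    have B': "B' \<in> carrier_mat n n" "B' * A = 1\<^sub>m n" using that A by auto
    have "B' = B' * (A * B)" using AB B' by simp
    also have "\<dots> = (B' * A) * B" using A B B' by (simp only: assoc_mult_mat[symmetric])
    also have "\<dots> = B" unfolding B'(2) using B by simp
    finally show ?thesis .
  qed
  have "mat_inv A = B" unfolding mat_inv_def using P U by (rule the_equality)
  then show ?thesis using B AB BA by simp
qed

lemma sqnorm_zero: assumes "sqnorm (v :: real vec) = 0" shows "v = 0\<^sub>v (dim_vec v)"
proof -
  have "(\<Sum>i\<in>{0..<dim_vec v}. v $ i * v $ i) = 0" using assms unfolding sqnorm_def scalar_prod_def by simp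
  then have "\<forall>i\<in>{0..<dim_vec v}. v $ i * v $ i = 0" by (subst (asm) sum_nonneg_eq_0_iff) auto
  then show ?thesis by (intro eq_vecI) auto
qed

lemma penrose_unique:
  fixes Z X Y :: "real mat"
  assumes Z: "Z \<in> carrier_mat r c" and X: "X \<in> carrier_mat c r" and Y: "Y \<in> carrier_mat c r"
   and X1: "Z * X * Z = Z" and X2: "X * Z * X = X" and X3: "transpose_mat (Z * X) = Z * X"
   and X4: "transpose_mat (X * Z) = X * Z"
   and Y1: "Z * Y * Z = Z" and Y2: "Y * Z * Y = Y" and Y3: "transpose_mat (Z * Y) = Z * Y"
   and Y4: "transpose_mat (Y * Z) = Y * Z"
  shows "X = Y"
proof -
  note [simp] = Z X Y mult_carrier_mat[OF Z Y] mult_carrier_mat[OF Z X] mult_carrier_mat[OF X Z] mult_carrier_mat[OF Y Z] mult_carrier_mat[OF X mult_carrier_mat[OF Z Y]]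
  have Zt: "transpose_mat Z = transpose_mat Z * (Z * Y)"
  proof -
    have "transpose_mat Z = transpose_mat (Z * Y * Z)" using Y1 by simp
    also have "\<dots> = transpose_mat Z * transpose_mat (Z * Y)"
      by (rule transpose_mult[of "Z * Y" r r Z c]) (use mult_carrier_mat[OF Z Y] in auto)
    finally show ?thesis using Y3 by simp
  qed
  have Zt2: "transpose_mat Z = (X * Z) * transpose_mat Z"
  proof -
    have "transpose_mat Z = transpose_mat (X * Z) * transpose_mat Z"
    proof -
      have "Z * (X * Z) = Z" using X1 by (simp add: assoc_mult_mat[of Z r c X r Z c])
      then show ?thesis using transpose_mult[of Z r c "X * Z" c] by (metis X Z mult_carrier_mat)
    qed
    then show ?thesis using X4 by simp
  qed
  have "X = X * (Z * X)" using X2 by (simp add: assoc_mult_mat[of X c r Z c X r])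
  also have "\<dots> = X * transpose_mat (Z * X)" using X3 by simp
  also have "\<dots> = X * (transpose_mat X * transpose_mat Z)" using transpose_mult[of Z r c X r] by simp
  also have "\<dots> = X * (transpose_mat X * (transpose_mat Z * (Z * Y)))" using Zt by simp
  also have "\<dots> = X * ((transpose_mat X * transpose_mat Z) * (Z * Y))"
    by (simp add: assoc_mult_mat[of "transpose_mat X" r c "transpose_mat Z" r "Z * Y" r])
  also have "transpose_mat X * transpose_mat Z = Z * X" using transpose_mult[of Z r c X r] X3 by simp
  also have "X * ((Z * X) * (Z * Y)) = (X * Z) * (X * (Z * Y))"
    using assoc_mult_mat[of Z r c X r "Z * Y" r] assoc_mult_mat[of X c r Z c "X * (Z * Y)" r] by simp
  also have "\<dots> = (X * Z * X) * (Z * Y)"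
    using assoc_mult_mat[of "X * Z" c c X r "Z * Y" r] by simp
  also have "\<dots> = X * Z * Y" using X2 by (simp add: assoc_mult_mat[of X c r Z c Y r])
  finally have XX: "X = X * Z * Y" .
  have "Y = (Y * Z) * Y" using Y2 by simp
  also have "\<dots> = transpose_mat (Y * Z) * Y" using Y4 by simp
  also have "\<dots> = (transpose_mat Z * transpose_mat Y) * Y" using transpose_mult[of Y c r Z c] by simp
  also have "\<dots> = ((X * Z) * transpose_mat Z * transpose_mat Y) * Y" using Zt2 by simp
  also have "\<dots> = (X * Z) * (transpose_mat Z * transpose_mat Y) * Y"
    by (simp add: assoc_mult_mat[of "X * Z" c c "transpose_mat Z" r "transpose_mat Y" c])
  also have "transpose_mat Z * transpose_mat Y = Y * Z" using transpose_mult[of Y c r Z c] Y4 by simp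
  also have "(X * Z) * (Y * Z) * Y = X * Z * (Y * Z * Y)"
    using assoc_mult_mat[of "X * Z" c c "Y * Z" c Y r] by simp
  also have "\<dots> = X * Z * Y" using Y2 by simp
  finally show ?thesis using XX by simp
qed

lemma pinv_props:
  fixes Z :: "real mat"
  assumes Z: "Z \<in> carrier_mat r c"
   and frr: "\<forall>v\<in>carrier_vec r. transpose_mat Z *\<^sub>v v = 0\<^sub>v c \<longrightarrow> v = 0\<^sub>v r"
  shows "pinv Z \<in> carrier_mat c r \<and> Z * pinv Z * Z = Z \<and> transpose_mat (pinv Z * Z) = pinv Z * Z"
proof -
  define G where "G = Z * transpose_mat Z"
  have Zt: "transpose_mat Z \<in> carrier_mat c r" using Z by simp
  have G: "G \<in> carrier_mat r r" unfolding G_def using Z by simp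
  have dG: "det G \<noteq> 0"
  proof
    assume "det G = 0"
    then obtain v where v: "v \<in> carrier_vec r" "v \<noteq> 0\<^sub>v r" "G *\<^sub>v v = 0\<^sub>v r"
      using det_0_iff_vec_prod_zero[OF G] by auto
    have Zv: "transpose_mat Z *\<^sub>v v \<in> carrier_vec c" using Z v by simp
    have "sqnorm (transpose_mat Z *\<^sub>v v) = v \<bullet> (Z *\<^sub>v (transpose_mat Z *\<^sub>v v))"
      unfolding sqnorm_def by (rule transpose_vec_mult_scalar[OF Z Zv v(1)])
    also have "Z *\<^sub>v (transpose_mat Z *\<^sub>v v) = G *\<^sub>v v" unfolding G_def using Z v by simp
    also have "v \<bullet> \<dots> = 0" using v by simp
    finally have "transpose_mat Z *\<^sub>v v = 0\<^sub>v c" using sqnorm_zero[of "transpose_mat Z *\<^sub>v v"] Zv by (metis carrier_vecD)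
    with frr v show False by auto
  qed
  from det_non_zero_imp_unit[OF G dG, of "()"]
  obtain Gi where Gi: "Gi \<in> carrier_mat r r" and GiG: "Gi * G = 1\<^sub>m r" and GGi: "G * Gi = 1\<^sub>m r"
    unfolding Units_def ring_mat_def by auto
  have GT: "transpose_mat G = G" unfolding G_def using transpose_mult[OF Z Zt] by simp
  have "transpose_mat Gi * G = transpose_mat (G * Gi)"
    using transpose_mult[OF G Gi] GT by simp
  also have "\<dots> = 1\<^sub>m r" using GGi by simp
  finally have GiTG: "transpose_mat Gi * G = 1\<^sub>m r" .
  have GiT: "transpose_mat Gi \<in> carrier_mat r r" using Gi by simp
  have "transpose_mat Gi = transpose_mat Gi * (G * Gi)" using GGi GiT by simp
  also have "\<dots> = (transpose_mat Gi * G) * Gi" using assoc_mult_mat[OF GiT G Gi] by simp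
  also have "\<dots> = Gi" using GiTG Gi by simp
  finally have GiS: "transpose_mat Gi = Gi" .
  define X where "X = transpose_mat Z * Gi"
  have X: "X \<in> carrier_mat c r" unfolding X_def using Zt Gi by simp
  have ZX: "Z * X = 1\<^sub>m r" unfolding X_def using assoc_mult_mat[OF Z Zt Gi] GGi G_def by simp
  have P1: "Z * X * Z = Z" using ZX Z by simp
  have P2: "X * Z * X = X" using assoc_mult_mat[OF X Z X] ZX X by simp
  have P3: "transpose_mat (Z * X) = Z * X" using ZX by simp
  have P4: "transpose_mat (X * Z) = X * Z"
  proof -
    have "transpose_mat (X * Z) = transpose_mat Z * transpose_mat X" using transpose_mult[OF X Z] by simp
    also have "transpose_mat X = Gi * Z" unfolding X_def using transpose_mult[OF Zt Gi] GiS by simp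
    also have "transpose_mat Z * (Gi * Z) = X * Z" unfolding X_def using assoc_mult_mat[OF Zt Gi Z] by simp
    finally show ?thesis .
  qed
  let ?P = "\<lambda>X. X \<in> carrier_mat (dim_col Z) (dim_row Z) \<and> Z * X * Z = Z \<and> X * Z * X = X \<and>
                    transpose_mat (Z * X) = Z * X \<and> transpose_mat (X * Z) = X * Z"
  have ex: "\<exists>!X. ?P X"
  proof (rule ex1I[of _ X])
    show "?P X" using X Z P1 P2 P3 P4 by auto
    fix Y assume "?P Y"
    then show "Y = X" using penrose_unique[OF Z _ X, of Y] Z P1 P2 P3 P4 by auto
  qed
  have "?P (pinv Z)" unfolding pinv_def by (rule theI'[OF ex])
  then show ?thesis using Z by auto
qed

lemma sqnorm_nonneg: "sqnorm (v :: real vec) \<ge> 0"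
  unfolding sqnorm_def scalar_prod_def by (auto intro: sum_nonneg)

lemma mat_vec_zero: "(A :: real mat) \<in> carrier_mat nr nc \<Longrightarrow> A *\<^sub>v 0\<^sub>v nc = 0\<^sub>v nr"
  by (intro eq_vecI) (auto simp: mult_mat_vec_def scalar_prod_def)

lemma vec_add_left_cancel: assumes "(x :: real vec) \<in> carrier_vec n" "y \<in> carrier_vec n" "z \<in> carrier_vec n"
  and "x + y = x + z" shows "y = z"
proof (rule eq_vecI)
  fix i assume i: "i < dim_vec z"
  have "(x + y) $ i = (x + z) $ i" using assms(4) by simp
  moreover have "(x + y) $ i = x $ i + y $ i" "(x + z) $ i = x $ i + z $ i" using assms(1-3) i by auto
  ultimately show "y $ i = z $ i" by simp
qed (use assms in auto)

lemma left_inv_inj: assumes A: "(A :: real mat) \<in> carrier_mat n n" and B: "B \<in> carrier_mat n n"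
  and BA: "B * A = 1\<^sub>m n" and x: "x \<in> carrier_vec n" and y: "y \<in> carrier_vec n" and e: "A *\<^sub>v x = A *\<^sub>v y"
  shows "x = y"
proof -
  have "x = B *\<^sub>v (A *\<^sub>v x)" using assoc_mult_mat_vec[OF B A x] BA x by simp
  moreover have "y = B *\<^sub>v (A *\<^sub>v y)" using assoc_mult_mat_vec[OF B A y] BA y by simp
  ultimately show ?thesis using e by simp
qed

lemma zero_vec_append: "0\<^sub>v (a + b) = (0\<^sub>v a :: real vec) @\<^sub>v 0\<^sub>v b"
  by (intro eq_vecI) auto

theorem proposition5:
  fixes m p Np Nf l :: nat
    and Wp Uf Yf L11 L21 L22 L31 L32 L33 Q1 Q2 Q3 Q4 :: "real mat"
    and J :: "real vec \<Rightarrow> real vec \<Rightarrow> real vec \<Rightarrow> real"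
    and U Y :: "real vec set"
    and lambda2 lambda3 :: real
  defines "n1 \<equiv> Np * (m + p)" and "n2 \<equiv> m * Nf" and "n3 \<equiv> p * Nf"
  defines "D \<equiv> vstack Wp (vstack Uf Yf)"
    and "Q \<equiv> vstack Q1 (vstack Q2 (vstack Q3 Q4))"
    and "Z \<equiv> vstack Wp Uf"
  defines "Pi_perp \<equiv> 1\<^sub>m l - pinv Z * Z"
  assumes Wp: "Wp \<in> carrier_mat n1 l" and Uf: "Uf \<in> carrier_mat n2 l"
    and Yf: "Yf \<in> carrier_mat n3 l"
    and rank: "full_row_rank D"
    and L11: "L11 \<in> carrier_mat n1 n1" "invertible_mat L11"
    and L22: "L22 \<in> carrier_mat n2 n2" "invertible_mat L22"
    and L33: "L33 \<in> carrier_mat n3 n3" "invertible_mat L33"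
    and L21: "L21 \<in> carrier_mat n2 n1"
    and L31: "L31 \<in> carrier_mat n3 n1" and L32: "L32 \<in> carrier_mat n3 n2"
    and Q1: "Q1 \<in> carrier_mat n1 l" and Q2: "Q2 \<in> carrier_mat n2 l"
    and Q3: "Q3 \<in> carrier_mat n3 l" and Q4: "Q4 \<in> carrier_mat (l - (n1 + n2 + n3)) l"
    and Q_orth: "Q * transpose_mat Q = 1\<^sub>m l" "transpose_mat Q * Q = 1\<^sub>m l"
    and LQ: "Wp = L11 * Q1" "Uf = L21 * Q1 + L22 * Q2" "Yf = L31 * Q1 + L32 * Q2 + L33 * Q3"
    and lambda3: "0 \<le> lambda3"
  shows "\<forall>xi \<in> carrier_vec n1.
           gddpc_opt L11 L21 L22 L31 L32 L33 J
             (\<lambda>g1 g2 g3. lambda2 * sqnorm g2 + lambda3 * sqnorm g3) U Y xi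
         = deepc_opt D n2 n3 J
             (\<lambda>a. lambda2 * sqnorm a + (lambda3 - lambda2) * sqnorm (Pi_perp *\<^sub>v a)) U Y xi"
proof -
  define n4 where "n4 = l - (n1 + n2 + n3)"
  have Q4': "Q4 \<in> carrier_mat n4 l" using Q4 unfolding n4_def .
  have Qc0: "Q \<in> carrier_mat (n1 + (n2 + (n3 + n4))) l" unfolding Q_def using Q1 Q2 Q3 Q4' by simp
  have "dim_row (Q * transpose_mat Q) = l" using Q_orth(1) by simp
  then have ldim: "n1 + (n2 + (n3 + n4)) = l" using Qc0 by simp
  have Qc: "Q \<in> carrier_mat l l" using Qc0 ldim by simp
  have QV: "Q *\<^sub>v b = (Q1 *\<^sub>v b) @\<^sub>v ((Q2 *\<^sub>v b) @\<^sub>v ((Q3 *\<^sub>v b) @\<^sub>v (Q4 *\<^sub>v b)))" for b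
    unfolding Q_def using Q1 Q2 Q3 Q4'
    by (simp add: vstack_mult_vec[OF Q1 vstack_carrier[OF Q2 vstack_carrier[OF Q3 Q4']]]
      vstack_mult_vec[OF Q2 vstack_carrier[OF Q3 Q4']] vstack_mult_vec[OF Q3 Q4'])
  have QT: "transpose_mat Q *\<^sub>v (w1 @\<^sub>v (w2 @\<^sub>v (w3 @\<^sub>v w4))) =
      transpose_mat Q1 *\<^sub>v w1 + (transpose_mat Q2 *\<^sub>v w2 + (transpose_mat Q3 *\<^sub>v w3 + transpose_mat Q4 *\<^sub>v w4))"
    if "w1 \<in> carrier_vec n1" "w2 \<in> carrier_vec n2" "w3 \<in> carrier_vec n3" "w4 \<in> carrier_vec n4" for w1 w2 w3 w4
    unfolding Q_def using Q1 Q2 Q3 Q4' that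
    by (simp add: vstack_transpose_mult_vec[of _ n1 l _ "n2 + (n3 + n4)"] vstack_transpose_mult_vec[of _ n2 l _ "n3 + n4"]
        vstack_transpose_mult_vec[of _ n3 l _ n4])
  have recon: "transpose_mat Q *\<^sub>v (w1 @\<^sub>v (w2 @\<^sub>v (w3 @\<^sub>v w4))) \<in> carrier_vec l \<and>
      Q1 *\<^sub>v (transpose_mat Q *\<^sub>v (w1 @\<^sub>v (w2 @\<^sub>v (w3 @\<^sub>v w4)))) = w1 \<and>
      Q2 *\<^sub>v (transpose_mat Q *\<^sub>v (w1 @\<^sub>v (w2 @\<^sub>v (w3 @\<^sub>v w4)))) = w2 \<and>
      Q3 *\<^sub>v (transpose_mat Q *\<^sub>v (w1 @\<^sub>v (w2 @\<^sub>v (w3 @\<^sub>v w4)))) = w3 \<and>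
      Q4 *\<^sub>v (transpose_mat Q *\<^sub>v (w1 @\<^sub>v (w2 @\<^sub>v (w3 @\<^sub>v w4)))) = w4"
    if w: "w1 \<in> carrier_vec n1" "w2 \<in> carrier_vec n2" "w3 \<in> carrier_vec n3" "w4 \<in> carrier_vec n4" for w1 w2 w3 w4
  proof -
    let ?w = "w1 @\<^sub>v (w2 @\<^sub>v (w3 @\<^sub>v w4))"
    let ?b = "transpose_mat Q *\<^sub>v ?w"
    have wc: "?w \<in> carrier_vec l" using w ldim[symmetric] by (metis append_carrier_vec)
    have "Q *\<^sub>v ?b = (Q * transpose_mat Q) *\<^sub>v ?w" using Qc wc by simp
    also have "\<dots> = ?w" using Q_orth(1) wc by simp
    finally have "(Q1 *\<^sub>v ?b) @\<^sub>v ((Q2 *\<^sub>v ?b) @\<^sub>v ((Q3 *\<^sub>v ?b) @\<^sub>v (Q4 *\<^sub>v ?b))) = ?w" unfolding QV .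
    moreover have bc: "?b \<in> carrier_vec l" using Qc wc by simp
    moreover have c: "Q1 *\<^sub>v ?b \<in> carrier_vec n1" "Q2 *\<^sub>v ?b \<in> carrier_vec n2" "Q3 *\<^sub>v ?b \<in> carrier_vec n3"
      using mult_mat_vec_carrier[OF Q1 bc] mult_mat_vec_carrier[OF Q2 bc] mult_mat_vec_carrier[OF Q3 bc] by auto
    ultimately show ?thesis using append_vec_eq[OF c(1) w(1)] append_vec_eq[OF c(2) w(2)] append_vec_eq[OF c(3) w(3)]
      by simp
  qed
  have decomp: "transpose_mat Q *\<^sub>v (Q *\<^sub>v b) = b" if "b \<in> carrier_vec l" for b
  proof -
    have "transpose_mat Q *\<^sub>v (Q *\<^sub>v b) = (transpose_mat Q * Q) *\<^sub>v b" using Qc that by simp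
    then show ?thesis using Q_orth(2) that by simp
  qed
  have sq: "sqnorm b = sqnorm (Q1 *\<^sub>v b) + (sqnorm (Q2 *\<^sub>v b) + (sqnorm (Q3 *\<^sub>v b) + sqnorm (Q4 *\<^sub>v b)))"
    if b: "b \<in> carrier_vec l" for b
  proof -
    have Qb: "Q *\<^sub>v b \<in> carrier_vec l" using Qc b by simp
    have "sqnorm b = (transpose_mat Q *\<^sub>v (Q *\<^sub>v b)) \<bullet> b" unfolding sqnorm_def using decomp[OF b] by simp
    also have "\<dots> = (Q *\<^sub>v b) \<bullet> (Q *\<^sub>v b)" by (rule transpose_vec_mult_scalar[OF Qc b Qb])
    finally have e0: "b \<bullet> b = (Q *\<^sub>v b) \<bullet> (Q *\<^sub>v b)" unfolding sqnorm_def .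
    have c: "Q1 *\<^sub>v b \<in> carrier_vec n1" "Q2 *\<^sub>v b \<in> carrier_vec n2" "Q3 *\<^sub>v b \<in> carrier_vec n3"
      "Q4 *\<^sub>v b \<in> carrier_vec n4"
      using mult_mat_vec_carrier[OF Q1 b] mult_mat_vec_carrier[OF Q2 b] mult_mat_vec_carrier[OF Q3 b]
        mult_mat_vec_carrier[OF Q4' b] by auto
    have c34: "(Q3 *\<^sub>v b) @\<^sub>v (Q4 *\<^sub>v b) \<in> carrier_vec (n3 + n4)" using c by auto
    have c234: "(Q2 *\<^sub>v b) @\<^sub>v ((Q3 *\<^sub>v b) @\<^sub>v (Q4 *\<^sub>v b)) \<in> carrier_vec (n2 + (n3 + n4))" using c c34 by auto
    note e3 = scalar_prod_append[OF c(3) c(4) c(3) c(4)]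
    note e2 = scalar_prod_append[OF c(2) c34 c(2) c34]
    note e1 = scalar_prod_append[OF c(1) c234 c(1) c234]
    show ?thesis unfolding sqnorm_def e0 QV e1 e2 e3 ..
  qed
  have Wpc: "Wp \<in> carrier_mat n1 l" by (rule Wp)
  have Zc: "Z \<in> carrier_mat (n1 + n2) l" unfolding Z_def using Wp Uf by simp
  have Dc: "D \<in> carrier_mat (n1 + (n2 + n3)) l" unfolding D_def using Wp Uf Yf by simp
  have Zfrr: "\<forall>v\<in>carrier_vec (n1 + n2). transpose_mat Z *\<^sub>v v = 0\<^sub>v l \<longrightarrow> v = 0\<^sub>v (n1 + n2)"
  proof (intro ballI impI)
    fix v :: "real vec" assume v: "v \<in> carrier_vec (n1 + n2)" and Zv: "transpose_mat Z *\<^sub>v v = 0\<^sub>v l"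
    define v1 where "v1 = vec_first v n1"
    define v2 where "v2 = vec_last v n2"
    have v12: "v = v1 @\<^sub>v v2" unfolding v1_def v2_def using v by simp
    have c: "v1 \<in> carrier_vec n1" "v2 \<in> carrier_vec n2" "0\<^sub>v n3 \<in> carrier_vec n3" unfolding v1_def v2_def by auto
    have c23: "v2 @\<^sub>v 0\<^sub>v n3 \<in> carrier_vec (n2 + n3)" using c by auto
    have "transpose_mat D *\<^sub>v (v1 @\<^sub>v (v2 @\<^sub>v 0\<^sub>v n3)) =
        transpose_mat Wp *\<^sub>v v1 + (transpose_mat Uf *\<^sub>v v2 + transpose_mat Yf *\<^sub>v 0\<^sub>v n3)"
      unfolding D_def using vstack_transpose_mult_vec[OF Wp vstack_carrier[OF Uf Yf] c(1) c23]
        vstack_transpose_mult_vec[OF Uf Yf c(2) c(3)] by simp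
    also have "transpose_mat Yf *\<^sub>v 0\<^sub>v n3 = 0\<^sub>v l" using Yf by (simp add: mat_vec_zero)
    also have "transpose_mat Uf *\<^sub>v v2 + 0\<^sub>v l = transpose_mat Uf *\<^sub>v v2" using Uf c by simp
    also have "transpose_mat Wp *\<^sub>v v1 + transpose_mat Uf *\<^sub>v v2 = transpose_mat Z *\<^sub>v v"
      unfolding Z_def v12 using vstack_transpose_mult_vec[OF Wp Uf c(1) c(2)] by simp
    finally have "transpose_mat D *\<^sub>v (v1 @\<^sub>v (v2 @\<^sub>v 0\<^sub>v n3)) = 0\<^sub>v (dim_col D)" using Zv Dc by simp
    moreover have "v1 @\<^sub>v (v2 @\<^sub>v 0\<^sub>v n3) \<in> carrier_vec (dim_row D)" using c c23 Dc by auto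
    ultimately have "v1 @\<^sub>v (v2 @\<^sub>v 0\<^sub>v n3) = 0\<^sub>v (dim_row D)" using rank unfolding full_row_rank_def by blast
    also have "0\<^sub>v (dim_row D) = 0\<^sub>v n1 @\<^sub>v (0\<^sub>v n2 @\<^sub>v 0\<^sub>v n3)" using Dc zero_vec_append[of n1 "n2+n3"] zero_vec_append[of n2 n3] by auto
    finally have "v1 = 0\<^sub>v n1 \<and> v2 = 0\<^sub>v n2"
      using append_vec_eq[OF c(1), of "0\<^sub>v n1"] append_vec_eq[OF c(2), of "0\<^sub>v n2"] by auto
    then show "v = 0\<^sub>v (n1 + n2)" using v12 by (simp add: zero_vec_append)
  qed
  define X where "X = pinv Z"
  have Xp: "X \<in> carrier_mat l (n1 + n2)" "Z * X * Z = Z" "transpose_mat (X * Z) = X * Z"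
    using pinv_props[OF Zc Zfrr] unfolding X_def by auto
  have Xc: "X \<in> carrier_mat l (n1 + n2)" by (rule Xp(1))
  have XZc: "X * Z \<in> carrier_mat l l" using Xc Zc by simp
  have L11i: "mat_inv L11 \<in> carrier_mat n1 n1 \<and> L11 * mat_inv L11 = 1\<^sub>m n1 \<and> mat_inv L11 * L11 = 1\<^sub>m n1"
    by (rule mat_inv_props[OF L11])
  have L22i: "mat_inv L22 \<in> carrier_mat n2 n2 \<and> L22 * mat_inv L22 = 1\<^sub>m n2 \<and> mat_inv L22 * L22 = 1\<^sub>m n2"
    by (rule mat_inv_props[OF L22])
  have inj11: "x = y" if "x \<in> carrier_vec n1" "y \<in> carrier_vec n1" "L11 *\<^sub>v x = L11 *\<^sub>v y" for x y
    using left_inv_inj[OF L11(1) _ _ that, of "mat_inv L11"] L11i by auto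
  have inj22: "x = y" if "x \<in> carrier_vec n2" "y \<in> carrier_vec n2" "L22 *\<^sub>v x = L22 *\<^sub>v y" for x y
    using left_inv_inj[OF L22(1) _ _ that, of "mat_inv L22"] L22i by auto
  have WpV: "Wp *\<^sub>v v = L11 *\<^sub>v (Q1 *\<^sub>v v)" if "v \<in> carrier_vec l" for v
    unfolding LQ(1) using L11 Q1 that by simp
  have UfV: "Uf *\<^sub>v v = L21 *\<^sub>v (Q1 *\<^sub>v v) + L22 *\<^sub>v (Q2 *\<^sub>v v)" if "v \<in> carrier_vec l" for v
    unfolding LQ(2) using L21 L22 Q1 Q2 that
    by (simp add: add_mult_distrib_mat_vec[of "L21 * Q1" n2 l "L22 * Q2" v])
  have YfV: "Yf *\<^sub>v v = L31 *\<^sub>v (Q1 *\<^sub>v v) + L32 *\<^sub>v (Q2 *\<^sub>v v) + L33 *\<^sub>v (Q3 *\<^sub>v v)" if "v \<in> carrier_vec l" for v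
    unfolding LQ(3) using L31 L32 L33 Q1 Q2 Q3 that
    by (simp add: add_mult_distrib_mat_vec[of "L31 * Q1 + L32 * Q2" n3 l "L33 * Q3" v]
       add_mult_distrib_mat_vec[of "L31 * Q1" n3 l "L32 * Q2" v])
  have ZV: "Z *\<^sub>v v = (Wp *\<^sub>v v) @\<^sub>v (Uf *\<^sub>v v)" for v unfolding Z_def by (rule vstack_mult_vec[OF Wp Uf])
  have z1: "0\<^sub>v n3 \<in> carrier_vec n3" "0\<^sub>v n4 \<in> carrier_vec n4" by auto
  have orth1: "Q3 *\<^sub>v (transpose_mat Q1 *\<^sub>v c) = 0\<^sub>v n3 \<and> Q4 *\<^sub>v (transpose_mat Q1 *\<^sub>v c) = 0\<^sub>v n4"
    if c: "c \<in> carrier_vec n1" for c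
  proof -
    have z2: "0\<^sub>v n2 \<in> carrier_vec n2" by auto
    have "transpose_mat Q *\<^sub>v (c @\<^sub>v (0\<^sub>v n2 @\<^sub>v (0\<^sub>v n3 @\<^sub>v 0\<^sub>v n4))) = transpose_mat Q1 *\<^sub>v c"
      unfolding QT[OF c z2 z1] using Q1 Q2 Q3 Q4' c by (simp add: mat_vec_zero)
    then show ?thesis using recon[OF c z2 z1] by simp
  qed
  have orth2: "Q3 *\<^sub>v (transpose_mat Q2 *\<^sub>v c) = 0\<^sub>v n3 \<and> Q4 *\<^sub>v (transpose_mat Q2 *\<^sub>v c) = 0\<^sub>v n4"
    if c: "c \<in> carrier_vec n2" for c
  proof -
    have z2: "0\<^sub>v n1 \<in> carrier_vec n1" by auto
    have "transpose_mat Q *\<^sub>v (0\<^sub>v n1 @\<^sub>v (c @\<^sub>v (0\<^sub>v n3 @\<^sub>v 0\<^sub>v n4))) = transpose_mat Q2 *\<^sub>v c"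
      unfolding QT[OF z2 c z1] using Q1 Q2 Q3 Q4' c by (simp add: mat_vec_zero)
    then show ?thesis using recon[OF z2 c z1] by simp
  qed
  have Piv: "Q1 *\<^sub>v (Pi_perp *\<^sub>v a) = 0\<^sub>v n1 \<and> Q2 *\<^sub>v (Pi_perp *\<^sub>v a) = 0\<^sub>v n2 \<and>
     Q3 *\<^sub>v (Pi_perp *\<^sub>v a) = Q3 *\<^sub>v a \<and> Q4 *\<^sub>v (Pi_perp *\<^sub>v a) = Q4 *\<^sub>v a \<and> Pi_perp *\<^sub>v a \<in> carrier_vec l"
    if a: "a \<in> carrier_vec l" for a
  proof -
    define b where "b = X *\<^sub>v (Z *\<^sub>v a)"
    have bc: "b \<in> carrier_vec l" unfolding b_def using Xc Zc a by simp
    have Pa: "Pi_perp *\<^sub>v a = a - b" unfolding Pi_perp_def b_def X_def[symmetric]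
      using minus_mult_distrib_mat_vec[OF one_carrier_mat XZc a] a Xc Zc by simp
    have Za: "Z *\<^sub>v a \<in> carrier_vec (n1 + n2)" using Zc a by simp
    have "Z *\<^sub>v b = (Z * X * Z) *\<^sub>v a" unfolding b_def
      using assoc_mult_mat_vec[OF mult_carrier_mat[OF Zc Xc] Zc a] assoc_mult_mat_vec[OF Zc Xc Za] by simp
    then have "Z *\<^sub>v b = Z *\<^sub>v a" using Xp(2) by simp
    then have WU: "Wp *\<^sub>v b = Wp *\<^sub>v a" "Uf *\<^sub>v b = Uf *\<^sub>v a"
      unfolding ZV using append_vec_eq[OF mult_mat_vec_carrier[OF Wp bc] mult_mat_vec_carrier[OF Wp a]] by auto
    have q1: "Q1 *\<^sub>v b = Q1 *\<^sub>v a"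
      by (rule inj11[OF mult_mat_vec_carrier[OF Q1 bc] mult_mat_vec_carrier[OF Q1 a]])
        (use WU(1) in \<open>unfold WpV[OF a] WpV[OF bc]\<close>)
    have "L21 *\<^sub>v (Q1 *\<^sub>v a) + L22 *\<^sub>v (Q2 *\<^sub>v b) = L21 *\<^sub>v (Q1 *\<^sub>v a) + L22 *\<^sub>v (Q2 *\<^sub>v a)"
      using WU(2) UfV[OF a] UfV[OF bc] q1 by simp
    then have "L22 *\<^sub>v (Q2 *\<^sub>v b) = L22 *\<^sub>v (Q2 *\<^sub>v a)"
      by (rule vec_add_left_cancel[rotated 3, of _ _ _ n2]) (use L21 L22 Q1 Q2 a bc in auto)
    then have q2: "Q2 *\<^sub>v b = Q2 *\<^sub>v a"
      by (rule inj22[OF mult_mat_vec_carrier[OF Q2 bc] mult_mat_vec_carrier[OF Q2 a]])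
    define w where "w = transpose_mat X *\<^sub>v a"
    have wc: "w \<in> carrier_vec (n1 + n2)" unfolding w_def using Xc a by simp
    define w1 where "w1 = vec_first w n1"
    define w2 where "w2 = vec_last w n2"
    have w12: "w = w1 @\<^sub>v w2" unfolding w1_def w2_def using wc by simp
    have w1c: "w1 \<in> carrier_vec n1" and w2c: "w2 \<in> carrier_vec n2" unfolding w1_def w2_def by auto
    have "b = (X * Z) *\<^sub>v a" unfolding b_def using Xc Zc a by simp
    also have "\<dots> = transpose_mat (X * Z) *\<^sub>v a" using Xp(3) by simp
    also have "\<dots> = (transpose_mat Z * transpose_mat X) *\<^sub>v a" using transpose_mult[OF Xc Zc] by simp
    also have "\<dots> = transpose_mat Z *\<^sub>v w" unfolding w_def using Xc Zc a by simp
    also have "\<dots> = transpose_mat Wp *\<^sub>v w1 + transpose_mat Uf *\<^sub>v w2"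
      unfolding Z_def w12 by (rule vstack_transpose_mult_vec[OF Wp Uf w1c w2c])
    finally have bW: "b = transpose_mat Wp *\<^sub>v w1 + transpose_mat Uf *\<^sub>v w2" .
    have WpT: "transpose_mat Wp *\<^sub>v w1 = transpose_mat Q1 *\<^sub>v (transpose_mat L11 *\<^sub>v w1)"
      unfolding LQ(1) using transpose_mult[OF L11(1) Q1] L11 Q1 w1c by simp
    have UfT: "transpose_mat Uf *\<^sub>v w2 = transpose_mat Q1 *\<^sub>v (transpose_mat L21 *\<^sub>v w2) +
        transpose_mat Q2 *\<^sub>v (transpose_mat L22 *\<^sub>v w2)"
    proof -
      have "transpose_mat Uf = transpose_mat (L21 * Q1) + transpose_mat (L22 * Q2)"
        unfolding LQ(2) using L21 L22 Q1 Q2 by (intro transpose_add) auto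
      also have "\<dots> = transpose_mat Q1 * transpose_mat L21 + transpose_mat Q2 * transpose_mat L22"
        using transpose_mult[OF L21 Q1] transpose_mult[OF L22(1) Q2] by simp
      finally show ?thesis using L21 L22 Q1 Q2 w2c
        by (simp add: add_mult_distrib_mat_vec[of "transpose_mat Q1 * transpose_mat L21" l n2])
    qed
    have c1: "transpose_mat L11 *\<^sub>v w1 \<in> carrier_vec n1" "transpose_mat L21 *\<^sub>v w2 \<in> carrier_vec n1"
      "transpose_mat L22 *\<^sub>v w2 \<in> carrier_vec n2" using L11 L21 L22 w1c w2c by auto
    have q34: "Q3 *\<^sub>v b = 0\<^sub>v n3 \<and> Q4 *\<^sub>v b = 0\<^sub>v n4"
      unfolding bW WpT UfT using Q1 Q2 Q3 Q4' c1 orth1[OF c1(1)] orth1[OF c1(2)] orth2[OF c1(3)]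
      by (simp add: mult_add_distrib_mat_vec[of Q3 n3 l] mult_add_distrib_mat_vec[of Q4 n4 l])
    show ?thesis unfolding Pa using q1 q2 q34 a bc Q1 Q2 Q3 Q4'
      by (simp add: mult_minus_distrib_mat_vec[of _ _ l])
  qed
  have sq0: "sqnorm (0\<^sub>v n :: real vec) = 0" for n unfolding sqnorm_def scalar_prod_def by simp
  have hD: "lambda2 * sqnorm a + (lambda3 - lambda2) * sqnorm (Pi_perp *\<^sub>v a) =
      lambda2 * sqnorm (Q1 *\<^sub>v a) + (lambda2 * sqnorm (Q2 *\<^sub>v a) + lambda3 * sqnorm (Q3 *\<^sub>v a)) + lambda3 * sqnorm (Q4 *\<^sub>v a)"
    if a: "a \<in> carrier_vec l" for a
  proof -
    have "sqnorm (Pi_perp *\<^sub>v a) = sqnorm (Q3 *\<^sub>v a) + sqnorm (Q4 *\<^sub>v a)"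
      using sq[of "Pi_perp *\<^sub>v a"] Piv[OF a] sq0 by simp
    then show ?thesis using sq[OF a] by (simp add: algebra_simps)
  qed
  show ?thesis
  proof (intro ballI)
    fix xi :: "real vec" assume xi: "xi \<in> carrier_vec n1"
    define g1 where "g1 = mat_inv L11 *\<^sub>v xi"
    have Li: "mat_inv L11 \<in> carrier_mat n1 n1" "L11 * mat_inv L11 = 1\<^sub>m n1" using L11i by auto
    have g1c: "g1 \<in> carrier_vec n1" unfolding g1_def by (rule mult_mat_vec_carrier[OF Li(1) xi])
    have L11g1: "L11 *\<^sub>v g1 = xi" unfolding g1_def
      using assoc_mult_mat_vec[OF L11(1) Li(1) xi] Li(2) xi by simp
    define fG where "fG = (\<lambda>u y g2 g3. g2 \<in> carrier_vec n2 \<and> g3 \<in> carrier_vec n3 \<and>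
                    u = L21 *\<^sub>v g1 + L22 *\<^sub>v g2 \<and>
                    y = L31 *\<^sub>v g1 + L32 *\<^sub>v g2 + L33 *\<^sub>v g3 \<and> u \<in> U \<and> y \<in> Y)"
    define fD where "fD = (\<lambda>u y a. u \<in> carrier_vec n2 \<and> y \<in> carrier_vec n3 \<and> a \<in> carrier_vec l \<and>
                          xi @\<^sub>v u @\<^sub>v y = D *\<^sub>v a \<and> u \<in> U \<and> y \<in> Y)"
    define ht where "ht = (\<lambda>g2 g3. lambda2 * sqnorm g2 + lambda3 * sqnorm g3)"
    define h where "h = (\<lambda>a. lambda2 * sqnorm a + (lambda3 - lambda2) * sqnorm (Pi_perp *\<^sub>v a))"
    have Geq: "gddpc_opt L11 L21 L22 L31 L32 L33 J
             (\<lambda>g1 g2 g3. lambda2 * sqnorm g2 + lambda3 * sqnorm g3) U Y xi =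
       {(u, y). \<exists>g2 g3. fG u y g2 g3 \<and>
           (\<forall>u' y' g2' g3'. fG u' y' g2' g3' \<longrightarrow> J xi u y + ht g2 g3 \<le> J xi u' y' + ht g2' g3')}"
      unfolding gddpc_opt_def Let_def fG_def ht_def g1_def using L22(1) L33(1) by simp
    have Deq: "deepc_opt D n2 n3 J
             (\<lambda>a. lambda2 * sqnorm a + (lambda3 - lambda2) * sqnorm (Pi_perp *\<^sub>v a)) U Y xi =
       {(u, y). \<exists>a. fD u y a \<and>
           (\<forall>u' y' a'. fD u' y' a' \<longrightarrow> J xi u y + h a \<le> J xi u' y' + h a')}"
      unfolding deepc_opt_def Let_def fD_def h_def using Dc by simp
    have DV: "D *\<^sub>v a = (Wp *\<^sub>v a) @\<^sub>v ((Uf *\<^sub>v a) @\<^sub>v (Yf *\<^sub>v a))" for a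
      unfolding D_def vstack_mult_vec[OF Wp vstack_carrier[OF Uf Yf]] vstack_mult_vec[OF Uf Yf] ..
    have hh: "h a = lambda2 * sqnorm g1 + ht (Q2 *\<^sub>v a) (Q3 *\<^sub>v a) + lambda3 * sqnorm (Q4 *\<^sub>v a)"
      if a: "a \<in> carrier_vec l" "Q1 *\<^sub>v a = g1" for a
      unfolding h_def ht_def hD[OF a(1)] a(2) by simp
    have DtoG: "Q1 *\<^sub>v a = g1 \<and> fG u y (Q2 *\<^sub>v a) (Q3 *\<^sub>v a)" if f: "fD u y a" for u y a
    proof -
      have a: "a \<in> carrier_vec l" and u: "u \<in> carrier_vec n2" and y: "y \<in> carrier_vec n3"
        and e: "xi @\<^sub>v (u @\<^sub>v y) = (Wp *\<^sub>v a) @\<^sub>v ((Uf *\<^sub>v a) @\<^sub>v (Yf *\<^sub>v a))"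
        and UY: "u \<in> U" "y \<in> Y"
        using f unfolding fD_def DV by auto
      have e1: "xi = Wp *\<^sub>v a" and e2: "u = Uf *\<^sub>v a" and e3: "y = Yf *\<^sub>v a"
        using e append_vec_eq[OF xi mult_mat_vec_carrier[OF Wp a]]
          append_vec_eq[OF u mult_mat_vec_carrier[OF Uf a]] by auto
      have q1: "Q1 *\<^sub>v a = g1"
        by (rule inj11[OF mult_mat_vec_carrier[OF Q1 a] g1c]) (use e1 WpV[OF a] L11g1 in simp)
      show ?thesis unfolding fG_def using q1 e2 e3 UY UfV[OF a] YfV[OF a] Q2 Q3 a by auto
    qed
    have GtoD: "fD u y (transpose_mat Q *\<^sub>v (g1 @\<^sub>v (g2 @\<^sub>v (g3 @\<^sub>v 0\<^sub>v n4)))) \<and>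
       h (transpose_mat Q *\<^sub>v (g1 @\<^sub>v (g2 @\<^sub>v (g3 @\<^sub>v 0\<^sub>v n4)))) = lambda2 * sqnorm g1 + ht g2 g3"
      if f: "fG u y g2 g3" for u y g2 g3
    proof -
      have g2: "g2 \<in> carrier_vec n2" and g3: "g3 \<in> carrier_vec n3"
        and eu: "u = L21 *\<^sub>v g1 + L22 *\<^sub>v g2" and ey: "y = L31 *\<^sub>v g1 + L32 *\<^sub>v g2 + L33 *\<^sub>v g3"
        and UY: "u \<in> U" "y \<in> Y" using f unfolding fG_def by auto
      define a where "a = transpose_mat Q *\<^sub>v (g1 @\<^sub>v (g2 @\<^sub>v (g3 @\<^sub>v 0\<^sub>v n4)))"
      have R: "a \<in> carrier_vec l" "Q1 *\<^sub>v a = g1" "Q2 *\<^sub>v a = g2" "Q3 *\<^sub>v a = g3" "Q4 *\<^sub>v a = 0\<^sub>v n4"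
        using recon[OF g1c g2 g3 z1(2)] unfolding a_def by auto
      have uc: "u \<in> carrier_vec n2" unfolding eu using L21 L22 g1c g2 by simp
      have yc: "y \<in> carrier_vec n3" unfolding ey using L31 L32 L33 g1c g2 g3 by simp
      have "D *\<^sub>v a = xi @\<^sub>v (u @\<^sub>v y)"
        unfolding DV WpV[OF R(1)] UfV[OF R(1)] YfV[OF R(1)] R(2-4) L11g1 eu ey ..
      then have "fD u y a" unfolding fD_def using uc yc R(1) UY by simp
      moreover have "h a = lambda2 * sqnorm g1 + ht g2 g3" using hh[OF R(1,2)] R(3-5) sq0 by simp
      ultimately show ?thesis unfolding a_def by simp
    qed
    have s4: "sqnorm (Q4 *\<^sub>v a) \<ge> 0" for a by (rule sqnorm_nonneg)
    show "gddpc_opt L11 L21 L22 L31 L32 L33 J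
             (\<lambda>g1 g2 g3. lambda2 * sqnorm g2 + lambda3 * sqnorm g3) U Y xi
         = deepc_opt D n2 n3 J
             (\<lambda>a. lambda2 * sqnorm a + (lambda3 - lambda2) * sqnorm (Pi_perp *\<^sub>v a)) U Y xi"
      unfolding Geq Deq
    proof (rule equalityI; rule subsetI)
      fix uy assume "uy \<in> {(u, y). \<exists>g2 g3. fG u y g2 g3 \<and>
           (\<forall>u' y' g2' g3'. fG u' y' g2' g3' \<longrightarrow> J xi u y + ht g2 g3 \<le> J xi u' y' + ht g2' g3')}"
      then obtain u y g2 g3 where uy: "uy = (u, y)" and fg: "fG u y g2 g3"
        and opt: "\<And>u' y' g2' g3'. fG u' y' g2' g3' \<Longrightarrow> J xi u y + ht g2 g3 \<le> J xi u' y' + ht g2' g3'"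
        by auto
      define a where "a = transpose_mat Q *\<^sub>v (g1 @\<^sub>v (g2 @\<^sub>v (g3 @\<^sub>v 0\<^sub>v n4)))"
      have fa: "fD u y a" and ha: "h a = lambda2 * sqnorm g1 + ht g2 g3" using GtoD[OF fg] unfolding a_def by auto
      have "J xi u y + h a \<le> J xi u' y' + h a'" if f': "fD u' y' a'" for u' y' a'
      proof -
        have q: "Q1 *\<^sub>v a' = g1" "fG u' y' (Q2 *\<^sub>v a') (Q3 *\<^sub>v a')" using DtoG[OF f'] by auto
        have a': "a' \<in> carrier_vec l" using f' unfolding fD_def by auto
        have "J xi u y + ht g2 g3 \<le> J xi u' y' + ht (Q2 *\<^sub>v a') (Q3 *\<^sub>v a')" by (rule opt[OF q(2)])
        moreover have "lambda3 * sqnorm (Q4 *\<^sub>v a') \<ge> 0" using lambda3 s4 by simp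
        ultimately show ?thesis using ha hh[OF a' q(1)] by simp
      qed
      then show "uy \<in> {(u, y). \<exists>a. fD u y a \<and>
           (\<forall>u' y' a'. fD u' y' a' \<longrightarrow> J xi u y + h a \<le> J xi u' y' + h a')}"
        unfolding uy using fa by blast
    next
      fix uy assume "uy \<in> {(u, y). \<exists>a. fD u y a \<and>
           (\<forall>u' y' a'. fD u' y' a' \<longrightarrow> J xi u y + h a \<le> J xi u' y' + h a')}"
      then obtain u y a where uy: "uy = (u, y)" and fa: "fD u y a"
        and opt: "\<And>u' y' a'. fD u' y' a' \<Longrightarrow> J xi u y + h a \<le> J xi u' y' + h a'"
        by auto
      have q: "Q1 *\<^sub>v a = g1" "fG u y (Q2 *\<^sub>v a) (Q3 *\<^sub>v a)" using DtoG[OF fa] by auto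
      have ac: "a \<in> carrier_vec l" using fa unfolding fD_def by auto
      have "J xi u y + ht (Q2 *\<^sub>v a) (Q3 *\<^sub>v a) \<le> J xi u' y' + ht g2' g3'" if f': "fG u' y' g2' g3'" for u' y' g2' g3'
      proof -
        define a' where "a' = transpose_mat Q *\<^sub>v (g1 @\<^sub>v (g2' @\<^sub>v (g3' @\<^sub>v 0\<^sub>v n4)))"
        have fa': "fD u' y' a'" and ha': "h a' = lambda2 * sqnorm g1 + ht g2' g3'"
          using GtoD[OF f'] unfolding a'_def by auto
        have "J xi u y + h a \<le> J xi u' y' + h a'" by (rule opt[OF fa'])
        moreover have "lambda3 * sqnorm (Q4 *\<^sub>v a) \<ge> 0" using lambda3 s4 by simp
        ultimately show ?thesis using ha' hh[OF ac q(1)] by simp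
      qed
      then show "uy \<in> {(u, y). \<exists>g2 g3. fG u y g2 g3 \<and>
           (\<forall>u' y' g2' g3'. fG u' y' g2' g3' \<longrightarrow> J xi u y + ht g2 g3 \<le> J xi u' y' + ht g2' g3')}"
        unfolding uy using q(2) by blast
    qed
  qed
qed

end
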